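(* For every $k\ge1$ for which $\beta_0,\dots,\beta_k$ are defined, the greatest common divisor of $\beta_0,\beta_1,\dots,\beta_k$ is $\frac{1}{Q_k}$.
   Context: Setting: $k$ (the field) is algebraically closed of characteristic $0$; $\nu^*$ is a $k$-valuation of a function field $K^*$ of transcendence degree $2$ whose value group is a subgroup of $\mathbb{Q}$ and whose residue field $V^*/m_{V^*}$ is $k$; $S$ is an algebraic two-dimensional regular local ring with quotient field $K^*$ dominated by $V^*$, with regular parameters $(x,y)$, and $\nu^*$ is normalized so that $\nu^*(x)=1$. Jumping polynomials: $T_0=x$, $T_1=y$, $q_0=\infty$, $p_1,q_1$ coprime positive integers with $\nu^*(y)=p_1/q_1$; for $i\ge1$, $n_{i,j}$ ($0\le j<i$) are nonnegative integers with $n_{i,j}<q_j$ and $q_i\nu^*(T_i)=\sum_{j<i}n_{i,j}\nu^*(T_j)$, $\lambda_i\in k$ is the residue of $T_i^{q_i}/\prod_{j<i}T_j^{n_{i,j}}$, $T_{i+1}=T_i^{q_i}-\lambda_i\prod_{j<i}T_j^{n_{i,j}}$, and $p_{i+1},q_{i+1}$ are coprime positive integers with $\nu^*(T_{i+1})=q_i\nu^*(T_i)+\frac{1}{q_1\cdots q_i}\frac{p_{i+1}}{q_{i+1}}$. Put $\beta_i=\nu^*(T_i)$ and $Q_i=q_1\cdots q_i$. For rationals, $b$ $\mathbb{Z}$-divides $a$ if $a\in b\mathbb{Z}$; the greatest common divisor of finitely many rationals is the greatest rational $g$ that $\mathbb{Z}$-divides all of them. *)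

theory Defs
  imports Complex_Main
begin

definition zdvd :: "rat \<Rightarrow> rat \<Rightarrow> bool" where
  "zdvd b a \<longleftrightarrow> (\<exists>m::int. a = of_int m * b)"

definition rat_gcd :: "rat set \<Rightarrow> rat" where
  "rat_gcd A = (GREATEST g. \<forall>a\<in>A. zdvd g a)"

text \<open>A rational-valued valuation nu on the nonzero elements of a field K, trivial on a
  subfield kf, whose residue field is kf (every element of nonnegative value has a residue
  in kf).  The value of nu at 0 is irrelevant (never used).\<close>
definition k_valuation :: "'K::field set \<Rightarrow> ('K \<Rightarrow> rat) \<Rightarrow> bool" where
  "k_valuation kf \<nu> \<longleftrightarrow>
     0 \<in> kf \<and> 1 \<in> kf \<and>
     (\<forall>a\<in>kf. \<forall>b\<in>kf. a + b \<in> kf \<and> a * b \<in> kf \<and> - a \<in> kf \<and> inverse a \<in> kf) \<and>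
     (\<forall>a b. a \<noteq> 0 \<longrightarrow> b \<noteq> 0 \<longrightarrow> \<nu> (a * b) = \<nu> a + \<nu> b) \<and>
     (\<forall>a b. a \<noteq> 0 \<longrightarrow> b \<noteq> 0 \<longrightarrow> a + b \<noteq> 0 \<longrightarrow> \<nu> (a + b) \<ge> min (\<nu> a) (\<nu> b)) \<and>
     (\<forall>c\<in>kf. c \<noteq> 0 \<longrightarrow> \<nu> c = 0) \<and>
     (\<forall>u. u \<noteq> 0 \<longrightarrow> \<nu> u \<ge> 0 \<longrightarrow> (\<exists>c\<in>kf. u - c = 0 \<or> \<nu> (u - c) > 0))"

definition has_residue :: "('K::field \<Rightarrow> rat) \<Rightarrow> 'K \<Rightarrow> 'K \<Rightarrow> bool" where
  "has_residue \<nu> u lam \<longleftrightarrow> (u - lam = 0 \<or> \<nu> (u - lam) > 0)"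

end

theory Submission imports Defs begin

definition spn :: "(nat \<Rightarrow> rat) \<Rightarrow> nat \<Rightarrow> rat set" where
  "spn b m = {r. \<exists>c::nat\<Rightarrow>int. r = (\<Sum>i\<le>m. of_int (c i) * b i)}"

lemma spn_gen: "i \<le> m \<Longrightarrow> b i \<in> spn b m"
  unfolding spn_def
  by (rule CollectI, rule exI[of _ "\<lambda>j. if j = i then 1 else 0"])
     (simp add: sum.delta if_distrib[of rat_of_int] if_distrib[of "\<lambda>a. a * _"] cong: if_cong)

lemma spn_add: "r \<in> spn b m \<Longrightarrow> s \<in> spn b m \<Longrightarrow> r + s \<in> spn b m"
  unfolding spn_def
proof (clarify)
  fix c d :: "nat \<Rightarrow> int"
  show "\<exists>e. (\<Sum>i\<le>m. of_int (c i) * b i) + (\<Sum>i\<le>m. of_int (d i) * b i) = (\<Sum>i\<le>m. of_int (e i) * b i)"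
    by (rule exI[of _ "\<lambda>i. c i + d i"]) (simp add: sum.distrib algebra_simps)
qed

lemma spn_scale: "r \<in> spn b m \<Longrightarrow> of_int z * r \<in> spn b m"
  unfolding spn_def
proof (clarify)
  fix c :: "nat \<Rightarrow> int"
  show "\<exists>e. of_int z * (\<Sum>i\<le>m. of_int (c i) * b i) = (\<Sum>i\<le>m. of_int (e i) * b i)"
    by (rule exI[of _ "\<lambda>i. z * c i"]) (simp add: sum_distrib_left algebra_simps)
qed

lemma spn_mono: "r \<in> spn b m \<Longrightarrow> r \<in> spn b (Suc m)"
  unfolding spn_def
proof (clarify)
  fix c :: "nat \<Rightarrow> int"
  show "\<exists>e. (\<Sum>i\<le>m. of_int (c i) * b i) = (\<Sum>i\<le>Suc m. of_int (e i) * b i)"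
    by (rule exI[of _ "c(Suc m := 0)"]) (simp add: sum.atMost_Suc)
qed

lemma spn_zdvd: "r \<in> spn b m \<Longrightarrow> (\<forall>i\<le>m. zdvd g (b i)) \<Longrightarrow> zdvd g r"
  unfolding spn_def
proof (clarify)
  fix c :: "nat \<Rightarrow> int"
  assume "\<forall>i\<le>m. zdvd g (b i)"
  then have "\<forall>i\<le>m. \<exists>z::int. b i = of_int z * g" by (simp add: zdvd_def)
  then obtain z where z: "\<forall>i\<le>m. b i = of_int (z i) * g" by metis
  have "(\<Sum>i\<le>m. of_int (c i) * b i) = (\<Sum>i\<le>m. of_int (c i) * (of_int (z i) * g))"
    using z by (intro sum.cong) auto
  also have "\<dots> = of_int (\<Sum>i\<le>m. c i * z i) * g" by (simp add: sum_distrib_right sum_distrib_left mult.commute mult.left_commute)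
  finally show "zdvd g (\<Sum>i\<le>m. of_int (c i) * b i)" unfolding zdvd_def by blast
qed

lemma Qsuc: "(\<Prod>j\<in>{1..Suc m}. (q::nat\<Rightarrow>nat) j) = (\<Prod>j\<in>{1..m}. q j) * q (Suc m)"
  by (simp add: atLeastAtMostSuc_conv mult.commute)

lemma main:
  fixes b :: "nat \<Rightarrow> rat" and p q :: "nat \<Rightarrow> nat" and k :: nat
  defines "Q \<equiv> \<lambda>m. (\<Prod>j\<in>{1..m}. q j)"
  assumes b0: "b 0 = 1" and b1: "k \<ge> 1 \<Longrightarrow> b 1 = of_nat (p 1) / of_nat (q 1)"
    and pq: "\<forall>i. 1 \<le> i \<and> i \<le> k \<longrightarrow> 0 < p i \<and> 0 < q i \<and> coprime (p i) (q i)"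
    and bs: "\<forall>i. 1 \<le> i \<and> i < k \<longrightarrow> b (Suc i) = of_nat (q i) * b i
           + (1 / of_nat (Q i)) * (of_nat (p (Suc i)) / of_nat (q (Suc i)))"
  shows "m \<le> k \<Longrightarrow> Q m > 0 \<and> (\<forall>i\<le>m. \<exists>z::int. b i = of_int z / of_nat (Q m)) \<and> 1 / of_nat (Q m) \<in> spn b m"
proof (induction m)
  case 0
  then show ?case using b0 spn_gen[of 0 0 b] by (simp add: Q_def)
next
  case (Suc m)
  then have IH: "Q m > 0" "\<forall>i\<le>m. \<exists>z::int. b i = of_int z / of_nat (Q m)" "1 / of_nat (Q m) \<in> spn b m"
    by auto
  have pqm: "0 < p (Suc m)" "0 < q (Suc m)" "coprime (p (Suc m)) (q (Suc m))" using pq Suc.prems by auto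
  have QS: "Q (Suc m) = Q m * q (Suc m)" unfolding Q_def by (rule Qsuc)
  have QSpos: "Q (Suc m) > 0" using QS IH(1) pqm by simp
  have Qr: "of_nat (Q (Suc m)) = (of_nat (Q m) :: rat) * of_nat (q (Suc m))" using QS by simp
  have Qmnz: "(of_nat (Q m) :: rat) \<noteq> 0" "(of_nat (q (Suc m)) :: rat) \<noteq> 0" using IH(1) pqm by auto
  have pe: "of_nat (p (Suc m)) / of_nat (Q (Suc m)) \<in> spn b (Suc m) \<and>
      (\<exists>z::int. b (Suc m) = of_int z / of_nat (Q (Suc m)))"
  proof (cases "m = 0")
    case True
    have "Q 1 = q 1" by (simp add: Q_def)
    then show ?thesis using True b1 Suc.prems spn_gen[of 1 1 b]
      by (auto intro: exI[of _ "int (p 1)"])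
  next
    case False
    have bS: "b (Suc m) = of_nat (q m) * b m + of_nat (p (Suc m)) / of_nat (Q (Suc m))"
      using bs Suc.prems False Qr by simp
    have "of_nat (p (Suc m)) / of_nat (Q (Suc m)) = b (Suc m) + of_int (- int (q m)) * b m"
      using bS by simp
    also have "\<dots> \<in> spn b (Suc m)"
      by (intro spn_add spn_scale spn_gen) auto
    finally have A: "of_nat (p (Suc m)) / of_nat (Q (Suc m)) \<in> spn b (Suc m)" .
    obtain z where z: "b m = of_int z / of_nat (Q m)" using IH(2) by auto
    have "b (Suc m) = of_int (int (q m) * z * int (q (Suc m)) + int (p (Suc m))) / of_nat (Q (Suc m))"
      using bS z Qr Qmnz by (simp add: field_simps)
    then show ?thesis using A by blast
  qed
  have part2: "\<forall>i\<le>Suc m. \<exists>z::int. b i = of_int z / of_nat (Q (Suc m))"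
  proof (intro allI impI)
    fix i assume "i \<le> Suc m"
    then consider "i \<le> m" | "i = Suc m" by linarith
    then show "\<exists>z::int. b i = of_int z / of_nat (Q (Suc m))"
    proof cases
      case 1
      then obtain z where z: "b i = of_int z / of_nat (Q m)" using IH(2) by auto
      have "b i = of_int (z * int (q (Suc m))) / of_nat (Q (Suc m))"
        using z Qr Qmnz by (simp add: field_simps)
      then show ?thesis by blast
    next
      case 2 then show ?thesis using pe by blast
    qed
  qed
  obtain u v :: int where uv: "u * int (p (Suc m)) + v * int (q (Suc m)) = 1"
    using bezout_int[of "int (p (Suc m))" "int (q (Suc m))"] pqm(3)
    by (metis coprime_int_iff coprime_iff_gcd_eq_1)
  have "(1::rat) / of_nat (Q (Suc m)) = of_int u * (of_nat (p (Suc m)) / of_nat (Q (Suc m))) + of_int v * (1 / of_nat (Q m))"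
  proof -
    have "(of_int u * of_nat (p (Suc m)) + of_int v * of_nat (q (Suc m)) :: rat) = 1"
      using uv by (metis of_int_1 of_int_add of_int_mult of_int_of_nat_eq)
    then show ?thesis using Qr Qmnz by (simp add: field_simps)
  qed
  also have "\<dots> \<in> spn b (Suc m)"
    using pe spn_mono[OF IH(3)] by (intro spn_add spn_scale) auto
  finally show ?case using QSpos part2 by blast
qed

theorem proposition5p3:
  fixes \<nu> :: "'K::field \<Rightarrow> rat" and kf :: "'K set" and x y :: 'K
    and T :: "nat \<Rightarrow> 'K" and p q :: "nat \<Rightarrow> nat" and n :: "nat \<Rightarrow> nat \<Rightarrow> nat"
    and lam :: "nat \<Rightarrow> 'K" and k :: nat
  assumes val: "k_valuation kf \<nu>"
    and x_nz: "x \<noteq> 0" and y_nz: "y \<noteq> 0"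
    and nu_x: "\<nu> x = 1"
    and k1: "k \<ge> 1"
    and T0: "T 0 = x" and T1: "T 1 = y"
    and T_nz: "\<forall>i\<le>k. T i \<noteq> 0"
    and pq: "\<forall>i. 1 \<le> i \<and> i \<le> k \<longrightarrow> 0 < p i \<and> 0 < q i \<and> coprime (p i) (q i)"
    and nu_y: "\<nu> y = of_nat (p 1) / of_nat (q 1)"
    and step: "\<forall>i. 1 \<le> i \<and> i < k \<longrightarrow>
        (\<forall>j. 1 \<le> j \<and> j < i \<longrightarrow> n i j < q j) \<and>
        of_nat (q i) * \<nu> (T i) = (\<Sum>j<i. of_nat (n i j) * \<nu> (T j)) \<and>
        lam i \<in> kf \<and>
        has_residue \<nu> (T i ^ q i / (\<Prod>j<i. T j ^ n i j)) (lam i) \<and>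
        T (Suc i) = T i ^ q i - lam i * (\<Prod>j<i. T j ^ n i j) \<and>
        \<nu> (T (Suc i)) = of_nat (q i) * \<nu> (T i)
           + (1 / of_nat (\<Prod>j\<in>{1..i}. q j)) * (of_nat (p (Suc i)) / of_nat (q (Suc i)))"
  shows "rat_gcd ((\<lambda>i. \<nu> (T i)) ` {0..k}) = 1 / of_nat (\<Prod>j\<in>{1..k}. q j)"
proof -
  define b where "b = (\<lambda>i. \<nu> (T i))"
  define Q where "Q = (\<lambda>m. (\<Prod>j\<in>{1..m}. q j))"
  have M: "Q k > 0 \<and> (\<forall>i\<le>k. \<exists>z::int. b i = of_int z / of_nat (Q k)) \<and> 1 / of_nat (Q k) \<in> spn b k"
    unfolding Q_def
  proof (rule main[of b k p q k])
    show "b 0 = 1" using T0 nu_x b_def by simp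
    show "k \<ge> 1 \<Longrightarrow> b 1 = of_nat (p 1) / of_nat (q 1)" using T1 nu_y b_def by simp
    show "\<forall>i. 1 \<le> i \<and> i \<le> k \<longrightarrow> 0 < p i \<and> 0 < q i \<and> coprime (p i) (q i)" by (rule pq)
    show "\<forall>i. 1 \<le> i \<and> i < k \<longrightarrow> b (Suc i) = of_nat (q i) * b i
           + (1 / of_nat (\<Prod>j\<in>{1..i}. q j)) * (of_nat (p (Suc i)) / of_nat (q (Suc i)))"
    proof (intro allI impI)
      fix i assume "1 \<le> i \<and> i < k"
      then have "\<nu> (T (Suc i)) = of_nat (q i) * \<nu> (T i)
           + (1 / of_nat (\<Prod>j\<in>{1..i}. q j)) * (of_nat (p (Suc i)) / of_nat (q (Suc i)))"
        using step by blast
      then show "b (Suc i) = of_nat (q i) * b i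
           + (1 / of_nat (\<Prod>j\<in>{1..i}. q j)) * (of_nat (p (Suc i)) / of_nat (q (Suc i)))"
        unfolding b_def .
    qed
  qed simp
  have img: "(\<lambda>i. \<nu> (T i)) ` {0..k} = b ` {..k}" unfolding b_def by auto
  have Qpos: "(0::rat) < 1 / of_nat (Q k)" using M by simp
  have Qk: "(\<Prod>j\<in>{1..k}. q j) = Q k" unfolding Q_def by simp
  show ?thesis
    unfolding img rat_gcd_def Qk
  proof (rule Greatest_equality)
    show "\<forall>a\<in>b ` {..k}. zdvd (1 / of_nat (Q k)) a"
    proof
      fix a assume "a \<in> b ` {..k}"
      then obtain i where "i \<le> k" "a = b i" by auto
      then obtain z where "a = of_int z / of_nat (Q k)" using M by auto
      then show "zdvd (1 / of_nat (Q k)) a" unfolding zdvd_def by (intro exI[of _ z]) simp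
    qed
  next
    fix g assume g: "\<forall>a\<in>b ` {..k}. zdvd g a"
    have "zdvd g (1 / of_nat (Q k))"
      using M g by (intro spn_zdvd[of _ b k]) auto
    then obtain m :: int where m: "1 / of_nat (Q k) = of_int m * g" unfolding zdvd_def by blast
    show "g \<le> 1 / of_nat (Q k)"
    proof (cases "g \<le> 0")
      case True then show ?thesis using Qpos by linarith
    next
      case False
      have "m > 0"
      proof (rule ccontr)
        assume "\<not> m > 0"
        then have "(of_int m :: rat) \<le> 0" by simp
        then have "of_int m * g \<le> 0" using False by (simp add: mult_nonpos_nonneg)
        then show False using m Qpos by linarith
      qed
      then have "(1::rat) \<le> of_int m" by simp
      then have "1 * g \<le> of_int m * g" using False by (intro mult_right_mono) auto
      then show ?thesis using m by simp
    qed
  qed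
qed

end
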